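(* Let $n\ge 1$ and $m\ge 2$ be integers with $m\nmid n$, and let $k$ be a nonnegative integer. If $mk>n$, then $\theta_{m,k}=\mathbf{0}$, i.e. $\theta_{m,k}(x)=(0,\dots,0)$ for every $x\in\mathbb{F}_2^n$.
   Context: For $x=(x_0,\dots,x_{n-1})\in\mathbb{F}_2^n$, indices of coordinates are taken modulo $n$. For a nonnegative integer $k$, the map $\theta_{m,k}\colon\mathbb{F}_2^n\to\mathbb{F}_2^n$ is defined by $\theta_{m,k}(x)=y$ with $y_i=x_{i+mk}\prod_{1\le j\le mk-1,\ m\nmid j}(x_{i+j}+1)$ for $i\in\{0,\dots,n-1\}$ (for $k=0$ the empty product is $1$, so $\theta_{m,0}$ is the identity map). *)

theory Defs
  imports "HOL-Library.Z2"
begin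

text \<open>Vectors in F_2^n are modelled as functions nat => bit, where only the
coordinates 0..n-1 matter; indices are taken modulo n.\<close>

definition theta :: "nat \<Rightarrow> nat \<Rightarrow> nat \<Rightarrow> (nat \<Rightarrow> bit) \<Rightarrow> nat \<Rightarrow> bit" where
  "theta n m k x i =
     x ((i + m * k) mod n) *
     (\<Prod>j\<in>{j. 1 \<le> j \<and> j \<le> m * k - 1 \<and> \<not> m dvd j}. (x ((i + j) mod n) + 1))"

end

theory Submission
  imports Defs
begin

theorem lemma1:
  fixes n m k :: nat and x :: "nat \<Rightarrow> bit"
  assumes "n \<ge> 1" and "m \<ge> 2" and "\<not> m dvd n" and "m * k > n"
  shows "\<forall>i < n. theta n m k x i = 0"
proof (intro allI impI)
  fix i assume "i < n"
  let ?S = "{j. 1 \<le> j \<and> j \<le> m * k - 1 \<and> \<not> m dvd j}"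
  show "theta n m k x i = 0"
  proof (cases "x ((i + m * k) mod n) = 0")
    case True
    then show ?thesis by (simp add: theta_def)
  next
    case False
    then have x1: "x ((i + m * k) mod n) = 1" by (cases "x ((i + m * k) mod n)") auto
    define j where "j = m * k - n"
    have j1: "1 \<le> j" "j \<le> m * k - 1" using assms unfolding j_def by auto
    have j2: "\<not> m dvd j"
    proof
      assume "m dvd j"
      moreover have "m dvd m * k" by simp
      ultimately have "m dvd m * k - j" using dvd_diff_nat by blast
      moreover have "m * k - j = n" using assms unfolding j_def by auto
      ultimately show False using assms by simp
    qed
    have jS: "j \<in> ?S" using j1 j2 by simp
    have "(i + j) mod n = (i + j + n) mod n" by simp
    also have "i + j + n = i + m * k" using assms unfolding j_def by auto
    finally have eq: "(i + j) mod n = (i + m * k) mod n" .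
    have fin: "finite ?S" by (rule finite_subset[of _ "{..m*k}"]) auto
    have "(\<Prod>j\<in>?S. (x ((i + j) mod n) + 1)) = 0"
      by (rule prod_zero[OF fin]) (use jS eq x1 in auto)
    then show ?thesis by (simp add: theta_def)
  qed
qed

end
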